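(* Let $X$ be a triangulation of a convex polygon using only the polygon's vertices, regarded as a $2$-dimensional simplicial complex whose facets are the triangles, and let $r\ge1$, $s\ge1$ be integers. There is a bijection between partitions of the vertices of $X$ into $r+2$ non-empty parts, each $(s+1)$-scattered, and partitions of the triangles of $X$ into $r$ non-empty parts, each $s$-scattered.
   Context: A walk is a sequence of triangles $f_1,\dots,f_p$ ($p\ge1$) in which consecutive triangles share an edge. For triangles $f,g$, $\mathrm{dist}(f,g)$ is the minimal $p-1$ over walks with $f_1=f$, $f_p=g$. For distinct vertices $v,w$, $\mathrm{dist}(v,w)$ is the minimal $p\ge1$ such that there is a walk $f_1,\dots,f_p$ with $v\in f_1$ and $w\in f_p$. A set of vertices (resp. triangles) is $s$-scattered if any two distinct elements have distance $\ge s$. *)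

theory Defs
  imports Main "HOL-Library.Disjoint_Sets"
begin

text \<open>The polygon has vertices 0, 1, ..., n-1 in cyclic order. A triangle
is a 3-element set of vertices. \<open>poly_triang i j T\<close> says that T is a
triangulation of the convex sub-polygon with vertices i, i+1, ..., j (for j = i+1
this degenerate polygon is an edge and T is empty). Every triangulation of a
convex polygon arises by the standard recursive decomposition: the edge {i,j}
lies in a unique triangle {i,k,j}, which splits the polygon into the two
sub-polygons i..k and k..j.\<close>

inductive poly_triang :: "nat \<Rightarrow> nat \<Rightarrow> nat set set \<Rightarrow> bool" where
  edge: "poly_triang i (Suc i) {}"
| split: "\<lbrakk>i < k; k < j; poly_triang i k T1; poly_triang k j T2\<rbrakk>
          \<Longrightarrow> poly_triang i j ({{i, k, j}} \<union> T1 \<union> T2)"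

definition polygon_triangulation :: "nat \<Rightarrow> nat set set \<Rightarrow> bool" where
  "polygon_triangulation n T \<longleftrightarrow> n \<ge> 3 \<and> poly_triang 0 (n - 1) T"

definition walk :: "nat set set \<Rightarrow> nat set list \<Rightarrow> bool" where
  "walk T ws \<longleftrightarrow> ws \<noteq> [] \<and> set ws \<subseteq> T \<and>
     (\<forall>i. Suc i < length ws \<longrightarrow> card (ws ! i \<inter> ws ! Suc i) \<ge> 2)"

definition tri_dist :: "nat set set \<Rightarrow> nat set \<Rightarrow> nat set \<Rightarrow> nat" where
  "tri_dist T f g = (LEAST d. \<exists>ws. walk T ws \<and> hd ws = f \<and> last ws = g \<and> length ws = d + 1)"

definition vert_dist :: "nat set set \<Rightarrow> nat \<Rightarrow> nat \<Rightarrow> nat" where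
  "vert_dist T v w = (LEAST p. \<exists>ws. walk T ws \<and> v \<in> hd ws \<and> w \<in> last ws \<and> length ws = p)"

definition vert_scattered :: "nat set set \<Rightarrow> nat \<Rightarrow> nat set \<Rightarrow> bool" where
  "vert_scattered T s A \<longleftrightarrow> (\<forall>v\<in>A. \<forall>w\<in>A. v \<noteq> w \<longrightarrow> vert_dist T v w \<ge> s)"

definition tri_scattered :: "nat set set \<Rightarrow> nat \<Rightarrow> nat set set \<Rightarrow> bool" where
  "tri_scattered T s A \<longleftrightarrow> (\<forall>f\<in>A. \<forall>g\<in>A. f \<noteq> g \<longrightarrow> tri_dist T f g \<ge> s)"

end

theory Submission
  imports Defs
begin

definition indep :: "('a \<Rightarrow> 'a \<Rightarrow> bool) \<Rightarrow> 'a set \<Rightarrow> bool" where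
  "indep R B \<longleftrightarrow> (\<forall>a\<in>B. \<forall>b\<in>B. a \<noteq> b \<longrightarrow> \<not> R a b)"

definition Parts :: "('a \<Rightarrow> 'a \<Rightarrow> bool) \<Rightarrow> 'a set \<Rightarrow> nat \<Rightarrow> 'a set set set" where
  "Parts R X m = {P. partition_on X P \<and> card P = m \<and> (\<forall>B\<in>P. indep R B)}"

lemma finite_Parts: "finite X \<Longrightarrow> finite (Parts R X m)"
  by (rule finite_subset[OF _ finitely_many_partition_on[of X]]) (auto simp: Parts_def)

lemma Parts_empty: "card (Parts R {} m) = (if m = 0 then 1 else 0)"
proof -
  have "Parts R {} m = (if m = 0 then {{}} else {})"
    by (auto simp: Parts_def partition_on_empty indep_def)
  then show ?thesis by simp
qed

lemma blocks_meeting_clique: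
  assumes P: "partition_on X P" and fin: "finite X" and ind: "\<forall>B\<in>P. indep R B"
    and NX: "N \<subseteq> X" and cl: "\<forall>a\<in>N. \<forall>b\<in>N. a \<noteq> b \<longrightarrow> R a b"
  shows "card {C\<in>P. C \<inter> N \<noteq> {}} = card N"
proof -
  let ?M = "{C\<in>P. C \<inter> N \<noteq> {}}"
  have finP: "finite P" using finite_elements[OF fin P] .
  have "N = (\<Union>C\<in>?M. C \<inter> N)" using P NX by (auto simp: partition_on_def)
  hence "card N = card (\<Union>C\<in>?M. C \<inter> N)" by simp
  also have "\<dots> = (\<Sum>C\<in>?M. card (C \<inter> N))"
  proof (rule card_UN_disjoint)
    show "finite ?M" using finP by simp
    show "\<forall>i\<in>?M. finite (i \<inter> N)" using NX fin finite_subset by blast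
    show "\<forall>i\<in>?M. \<forall>j\<in>?M. i \<noteq> j \<longrightarrow> (i \<inter> N) \<inter> (j \<inter> N) = {}"
      using partition_onD2[OF P] by (auto simp: disjoint_def)
  qed
  also have "\<dots> = (\<Sum>C\<in>?M. 1)"
  proof (rule sum.cong[OF refl])
    fix C assume C: "C \<in> ?M"
    then obtain y where y: "y \<in> C \<inter> N" by blast
    have "C \<inter> N = {y}"
    proof
      show "C \<inter> N \<subseteq> {y}"
      proof
        fix z assume z: "z \<in> C \<inter> N"
        show "z \<in> {y}"
        proof (rule ccontr)
          assume "z \<notin> {y}"
          hence "R y z" using cl y z by auto
          moreover have "indep R C" using ind C by auto
          ultimately show False using y z \<open>z \<notin> {y}\<close> by (auto simp: indep_def)
        qed
      qed
    qed (use y in auto)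
    thus "card (C \<inter> N) = 1" by simp
  qed
  also have "\<dots> = card ?M" by simp
  finally show ?thesis by simp
qed

lemma count_insert:
  assumes fin: "finite X" and x: "x \<notin> X" and sym: "\<And>a b. R a b \<Longrightarrow> R b a"
    and cl: "\<forall>a\<in>{y\<in>X. R x y}. \<forall>b\<in>{y\<in>X. R x y}. a \<noteq> b \<longrightarrow> R a b"
  shows "card (Parts R (insert x X) m) =
     (m - card {y\<in>X. R x y}) * card (Parts R X m) + (if m = 0 then 0 else card (Parts R X (m - 1)))"
proof -
  define N where "N = {y\<in>X. R x y}"
  have NX: "N \<subseteq> X" by (auto simp: N_def)
  have cl': "\<forall>a\<in>N. \<forall>b\<in>N. a \<noteq> b \<longrightarrow> R a b" using cl by (simp add: N_def)
  let ?PX = "Parts R (insert x X) m"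
  define A where "A = {P\<in>?PX. {x} \<in> P}"
  define B where "B = {P\<in>?PX. {x} \<notin> P}"
  have finPX: "finite ?PX" using fin by (simp add: finite_Parts)
  have PXAB: "?PX = A \<union> B" "A \<inter> B = {}" by (auto simp: A_def B_def)
  have cardPX: "card ?PX = card A + card B"
    using PXAB finPX by (simp add: card_Un_disjoint)
  have cardA: "card A = (if m = 0 then 0 else card (Parts R X (m - 1)))"
  proof (cases "m = 0")
    case True
    have "A = {}"
    proof (rule ccontr)
      assume "A \<noteq> {}"
      then obtain P where P: "P \<in> A" by blast
      hence "partition_on (insert x X) P" "card P = 0" "{x} \<in> P" using True by (auto simp: A_def Parts_def)
      moreover have "finite P" using finite_elements[OF _ calculation(1)] fin by simp
      ultimately show False by auto
    qed
    thus ?thesis using True by simp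
  next
    case False
    have "bij_betw (\<lambda>P. P - {{x}}) A (Parts R X (m - 1))"
    proof (rule bij_betw_byWitness[where f' = "insert {x}"])
      show "\<forall>P\<in>A. insert {x} (P - {{x}}) = P" by (auto simp: A_def)
      show "\<forall>P\<in>Parts R X (m - 1). insert {x} P - {{x}} = P"
        using x by (auto simp: Parts_def partition_on_def)
      show "(\<lambda>P. P - {{x}}) ` A \<subseteq> Parts R X (m - 1)"
      proof
        fix Q assume "Q \<in> (\<lambda>P. P - {{x}}) ` A"
        then obtain P where P: "P \<in> A" "Q = P - {{x}}" by auto
        have pp: "partition_on (insert x X) P" "card P = m" "\<forall>B\<in>P. indep R B" "{x} \<in> P"
          using P by (auto simp: A_def Parts_def)
        have finP: "finite P" using finite_elements[OF _ pp(1)] fin by simp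
        have "partition_on X Q"
        proof -
          have dd: "\<And>E. E \<in> P \<Longrightarrow> E \<noteq> {x} \<Longrightarrow> E \<inter> {x} = {}"
            using partition_onD2[OF pp(1)] pp(4) by (simp add: disjoint_def)
          have "disjnt {x} (\<Union>(P - {{x}}))" using dd by (auto simp: disjnt_def)
          then have "partition_on (insert x X) (insert {x} (P - {{x}})) \<longleftrightarrow> partition_on (insert x X - {x}) (P - {{x}}) \<and> {x} \<subseteq> insert x X \<and> {x} \<noteq> {}"
            by (rule partition_on_insert)
          moreover have "insert {x} (P - {{x}}) = P" using pp(4) by auto
          ultimately show ?thesis using pp(1) x P(2) by simp
        qed
        moreover have "card Q = m - 1" using P(2) pp finP by simp
        ultimately show "Q \<in> Parts R X (m - 1)" using pp(3) P(2) by (auto simp: Parts_def)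
      qed
      show "insert {x} ` Parts R X (m - 1) \<subseteq> A"
      proof
        fix P assume "P \<in> insert {x} ` Parts R X (m - 1)"
        then obtain Q where Q: "Q \<in> Parts R X (m - 1)" "P = insert {x} Q" by auto
        have qq: "partition_on X Q" "card Q = m - 1" "\<forall>B\<in>Q. indep R B"
          using Q by (auto simp: Parts_def)
        have finQ: "finite Q" using finite_elements[OF fin qq(1)] .
        have nx: "{x} \<notin> Q" using qq(1) x by (auto simp: partition_on_def)
        have dj: "disjnt {x} (\<Union>Q)" using qq(1) x by (auto simp: partition_on_def disjnt_def)
        have "partition_on (insert x X) P"
          using partition_on_insert[OF dj, of "insert x X"] qq(1) x Q(2)
          by (simp add: insert_Diff_if)
        moreover have "card P = m" using Q(2) qq nx finQ False by simp
        moreover have "\<forall>B\<in>P. indep R B" using qq(3) Q(2) by (auto simp: indep_def)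
        ultimately show "P \<in> A" using Q(2) by (auto simp: A_def Parts_def)
      qed
    qed
    then have "card A = card (Parts R X (m - 1))" by (rule bij_betw_same_card)
    thus ?thesis using False by simp
  qed
  define S where "S = Sigma (Parts R X m) (\<lambda>P. {C\<in>P. C \<inter> N = {}})"
  define h where "h = (\<lambda>(P::'a set set, C::'a set). insert (insert x C) (P - {C}))"
  have cardS: "card S = (m - card N) * card (Parts R X m)"
  proof -
    have "card S = (\<Sum>P\<in>Parts R X m. card {C\<in>P. C \<inter> N = {}})"
      unfolding S_def
    proof (rule card_SigmaI)
      show "finite (Parts R X m)" using fin by (rule finite_Parts)
      show "\<forall>P\<in>Parts R X m. finite {C\<in>P. C \<inter> N = {}}"
      proof
        fix P assume "P \<in> Parts R X m"
        hence "finite P" using finite_elements[OF fin] by (auto simp: Parts_def)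
        thus "finite {C\<in>P. C \<inter> N = {}}" by simp
      qed
    qed
    also have "\<dots> = (\<Sum>P\<in>Parts R X m. m - card N)"
    proof (rule sum.cong[OF refl])
      fix P assume P: "P \<in> Parts R X m"
      have pp: "partition_on X P" "card P = m" "\<forall>B\<in>P. indep R B" using P by (auto simp: Parts_def)
      have finP: "finite P" using finite_elements[OF fin pp(1)] .
      have "{C\<in>P. C \<inter> N = {}} = P - {C\<in>P. C \<inter> N \<noteq> {}}" by auto
      hence "card {C\<in>P. C \<inter> N = {}} = card P - card {C\<in>P. C \<inter> N \<noteq> {}}"
        using finP by (simp add: card_Diff_subset)
      thus "card {C\<in>P. C \<inter> N = {}} = m - card N"
        using blocks_meeting_clique[OF pp(1) fin pp(3) NX cl'] pp(2) by simp
    qed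
    also have "\<dots> = (m - card N) * card (Parts R X m)" by simp
    finally show ?thesis .
  qed
  have cardB: "card B = card S"
  proof -
    have inj: "inj_on h S"
    proof (rule inj_onI)
      fix a b assume a: "a \<in> S" and b: "b \<in> S" and eq: "h a = h b"
      obtain P C where aPC: "a = (P, C)" by (cases a)
      obtain Q D where bQD: "b = (Q, D)" by (cases b)
      have pa: "partition_on X P" "C \<in> P" using a aPC by (auto simp: S_def Parts_def)
      have pb: "partition_on X Q" "D \<in> Q" using b bQD by (auto simp: S_def Parts_def)
      have xP: "\<forall>E\<in>P. x \<notin> E" using pa x by (auto simp: partition_on_def)
      have xQ: "\<forall>E\<in>Q. x \<notin> E" using pb x by (auto simp: partition_on_def)
      have eq': "insert (insert x C) (P - {C}) = insert (insert x D) (Q - {D})"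
        using eq aPC bQD by (simp add: h_def)
      have "insert x C \<in> insert (insert x D) (Q - {D})" using eq' by blast
      hence "insert x C = insert x D" using xQ by auto
      hence CD: "C = D" using xP xQ pa pb by (metis insert_ident)
      have "P - {C} = Q - {D}"
      proof -
        have "P - {C} = insert (insert x C) (P - {C}) - {insert x C}" using xP by auto
        also have "\<dots> = insert (insert x D) (Q - {D}) - {insert x D}" using eq' CD by simp
        also have "\<dots> = Q - {D}" using xQ by auto
        finally show ?thesis .
      qed
      hence "P = Q" using pa pb CD by (metis insert_Diff)
      thus "a = b" using aPC bQD CD by simp
    qed
    have img: "h ` S = B"
    proof
      show "h ` S \<subseteq> B"
      proof
        fix Z assume "Z \<in> h ` S"
        then obtain P C where PC: "(P, C) \<in> S" "Z = insert (insert x C) (P - {C})"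
          by (auto simp: h_def)
        have pp: "partition_on X P" "card P = m" "\<forall>B\<in>P. indep R B" "C \<in> P" "C \<inter> N = {}"
          using PC by (auto simp: S_def Parts_def)
        have finP: "finite P" using finite_elements[OF fin pp(1)] .
        have xP: "\<forall>E\<in>P. x \<notin> E" using pp x by (auto simp: partition_on_def)
        have Cne: "C \<noteq> {}" using pp by (auto simp: partition_on_def)
        have dj: "disjnt (insert x C) (\<Union>(P - {C}))"
          using partition_onD2[OF pp(1)] pp(4) xP by (auto simp: disjoint_def disjnt_def)
        have pPC: "partition_on (X - C) (P - {C})"
        proof -
          have dj2: "disjnt C (\<Union>(P - {C}))"
            using partition_onD2[OF pp(1)] pp(4) unfolding disjoint_def disjnt_def by blast
          have "insert C (P - {C}) = P" using pp(4) by auto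
          thus ?thesis using partition_on_insert[OF dj2, of X] pp(1) by simp
        qed
        have CX: "C \<subseteq> X" using pp by (auto simp: partition_on_def)
        have eqX: "insert x X - insert x C = X - C" using x by auto
        have "partition_on (insert x X) Z"
          using partition_on_insert[OF dj, of "insert x X"] PC(2) pPC CX eqX by (simp add: subset_insertI2)
        moreover have "card Z = m"
        proof -
          have "insert x C \<notin> P - {C}" using xP by auto
          hence "card Z = Suc (card (P - {C}))" using PC(2) finP by simp
          moreover have "card P > 0" using pp(4) finP card_gt_0_iff by blast
          moreover have "card (P - {C}) = card P - 1" using pp(4) finP by simp
          ultimately show ?thesis using pp(2) by simp
        qed
        moreover have "\<forall>B\<in>Z. indep R B"
        proof
          fix E assume "E \<in> Z"
          then consider "E = insert x C" | "E \<in> P" using PC(2) by auto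
          thus "indep R E"
          proof cases
            case 1
            have "indep R C" using pp by auto
            moreover have "\<forall>c\<in>C. \<not> R x c" using pp CX by (auto simp: N_def)
            ultimately show ?thesis using 1 sym by (auto simp: indep_def)
          qed (use pp in auto)
        qed
        moreover have "{x} \<notin> Z" using PC(2) Cne xP pp(4) by auto
        ultimately show "Z \<in> B" by (auto simp: B_def Parts_def)
      qed
      show "B \<subseteq> h ` S"
      proof
        fix Z assume Z: "Z \<in> B"
        have zz: "partition_on (insert x X) Z" "card Z = m" "\<forall>B\<in>Z. indep R B" "{x} \<notin> Z"
          using Z by (auto simp: B_def Parts_def)
        have finZ: "finite Z" using finite_elements[OF _ zz(1)] fin by simp
        obtain C where C: "C \<in> Z" "x \<in> C" using zz(1) by (auto simp: partition_on_def)
        define C' where "C' = C - {x}"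
        have C'ne: "C' \<noteq> {}"
        proof
          assume "C' = {}"
          hence "C = {x}" using C(2) by (auto simp: C'_def)
          thus False using C(1) zz(4) by simp
        qed
        have dis: "\<forall>E\<in>Z. E \<noteq> C \<longrightarrow> E \<inter> C = {}" using partition_onD2[OF zz(1)] C by (auto simp: disjoint_def)
        have xE: "\<forall>E\<in>Z. E \<noteq> C \<longrightarrow> x \<notin> E" using dis C by auto
        define P where "P = insert C' (Z - {C})"
        have C'nin: "C' \<notin> Z - {C}"
        proof
          assume "C' \<in> Z - {C}"
          hence "C' \<inter> C = {}" using dis by auto
          thus False using C'ne by (auto simp: C'_def)
        qed
        have pP: "partition_on X P"
        proof (rule partition_onI)
          show "\<Union>P = X"
          proof -
            have u0: "\<Union>Z = insert x X" using zz(1) by (auto simp: partition_on_def)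
            have u1: "\<Union>P = (C - {x}) \<union> \<Union>(Z - {C})" by (auto simp: P_def C'_def)
            have u2: "\<Union>Z = C \<union> \<Union>(Z - {C})" using C(1) by auto
            have u3: "x \<notin> \<Union>(Z - {C})" using xE by auto
            have "\<Union>P = \<Union>Z - {x}" using u1 u2 u3 by auto
            thus ?thesis using u0 x by auto
          qed
          have dZ: "\<And>p q. p\<in>Z \<Longrightarrow> q\<in>Z \<Longrightarrow> p\<noteq>q \<Longrightarrow> p \<inter> q = {}"
            using partition_onD2[OF zz(1)] by (simp add: disjoint_def)
          show "p \<in> P \<Longrightarrow> q \<in> P \<Longrightarrow> p \<noteq> q \<Longrightarrow> disjnt p q" for p q
            using dZ[of p q] dZ[of C q] dZ[of p C] C(1) unfolding P_def C'_def disjnt_def by auto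
          show "{} \<notin> P" using zz(1) C'ne by (auto simp: P_def partition_on_def)
        qed
        have cP: "card P = m"
        proof -
          have "card Z > 0" using C(1) finZ card_gt_0_iff by blast
          moreover have "card (Z - {C}) = card Z - 1" using C(1) finZ by simp
          moreover have "card P = Suc (card (Z - {C}))" using C'nin finZ unfolding P_def by simp
          ultimately show ?thesis using zz(2) by simp
        qed
        have iC: "indep R C" using zz(3) C(1) by auto
        have iP: "\<forall>B\<in>P. indep R B"
          using zz(3) iC by (auto simp: P_def C'_def indep_def)
        have C'N: "C' \<inter> N = {}"
        proof -
          have "indep R C" using zz C by auto
          thus ?thesis using C unfolding C'_def N_def indep_def by auto
        qed
        have "(P, C') \<in> S" using pP cP iP C'N by (auto simp: S_def Parts_def P_def)
        moreover have "h (P, C') = Z"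
        proof -
          have "insert x C' = C" using C by (auto simp: C'_def)
          moreover have "P - {C'} = Z - {C}" using C'nin by (auto simp: P_def)
          ultimately show ?thesis using C by (auto simp: h_def)
        qed
        ultimately show "Z \<in> h ` S" by force
      qed
    qed
    show ?thesis using inj img card_image by fastforce
  qed
  show ?thesis using cardPX cardA cardB cardS by (simp add: N_def)
qed


definition istri :: "nat set \<Rightarrow> bool" where
  "istri f \<longleftrightarrow> (\<exists>a b c. a < b \<and> b < c \<and> f = {a, b, c})"

definition mid :: "nat set \<Rightarrow> nat" where
  "mid f = Min (f - {Min f})"

lemma tri_vals:
  assumes "a < b" "b < c"
  shows "Min {a,b,c} = a" "Max {a,b,c} = c" "mid {a,b,c} = b"
proof -
  show m: "Min {a,b,c} = a" using assms by (simp add: min_def)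
  show "Max {a,b,c} = c" using assms by (simp add: max_def)
  have "{a,b,c} - {a} = {b,c}" using assms by auto
  thus "mid {a,b,c} = b" using assms m by (simp add: mid_def min_def)
qed

lemma istri_D:
  assumes "istri f"
  shows "f = {Min f, mid f, Max f}" "Min f < mid f" "mid f < Max f" "finite f" "card f = 3"
proof -
  obtain a b c where abc: "a < b" "b < c" "f = {a,b,c}" using assms by (auto simp: istri_def)
  show "f = {Min f, mid f, Max f}" "Min f < mid f" "mid f < Max f" "finite f" "card f = 3"
    using abc tri_vals[OF abc(1,2)] by auto
qed

lemma istri_mem:
  assumes "istri f" "x \<in> f"
  shows "x = Min f \<or> x = mid f \<or> x = Max f" "Min f \<le> x" "x \<le> Max f"
proof -
  have f: "f = {Min f, mid f, Max f}" "Min f < mid f" "mid f < Max f" using istri_D[OF assms(1)] by auto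
  show "x = Min f \<or> x = mid f \<or> x = Max f" using assms(2) f(1) by blast
  thus "Min f \<le> x" "x \<le> Max f" using f by auto
qed

lemma istri_memI: "istri f \<Longrightarrow> Min f \<in> f \<and> mid f \<in> f \<and> Max f \<in> f"
  using istri_D(1) by (metis insertI1 insert_commute)

definition below :: "nat set \<Rightarrow> nat set \<Rightarrow> bool" where
  "below f g \<longleftrightarrow> (Min g \<le> Min f \<and> Max f \<le> mid g) \<or> (mid g \<le> Min f \<and> Max f \<le> Max g)"

lemma below_irrefl: "istri f \<Longrightarrow> \<not> below f f"
  using istri_D[of f] by (auto simp: below_def)

lemma below_bounds: "istri f \<Longrightarrow> istri g \<Longrightarrow> below f g \<Longrightarrow> Min g \<le> Min f \<and> Max f \<le> Max g"
  using istri_D[of f] istri_D[of g] by (auto simp: below_def)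

lemma below_trans: "istri f \<Longrightarrow> istri g \<Longrightarrow> istri h \<Longrightarrow> below f g \<Longrightarrow> below g h \<Longrightarrow> below f h"
  using istri_D[of f] istri_D[of g] istri_D[of h] unfolding below_def by linarith

lemma below_asym: "istri f \<Longrightarrow> istri g \<Longrightarrow> below f g \<Longrightarrow> \<not> below g f"
  using below_trans below_irrefl by blast

definition lam :: "nat set set \<Rightarrow> bool" where
  "lam T \<longleftrightarrow> (\<forall>f\<in>T. \<forall>g\<in>T. f \<noteq> g \<longrightarrow> below f g \<or> below g f \<or> Max f \<le> Min g \<or> Max g \<le> Min f)"

definition good :: "nat set set \<Rightarrow> nat set \<Rightarrow> bool" where
  "good T \<rho> \<longleftrightarrow> finite T \<and> \<rho> \<in> T \<and> (\<forall>f\<in>T. istri f) \<and> lam T \<and> (\<forall>f\<in>T. f = \<rho> \<or> below f \<rho>) \<and>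
     (\<forall>f\<in>T. f \<noteq> \<rho> \<longrightarrow> (\<exists>p\<in>T. below f p \<and> Min f \<in> p \<and> Max f \<in> p))"

definition anc :: "nat set set \<Rightarrow> nat set \<Rightarrow> nat set set" where
  "anc T f = {g\<in>T. g = f \<or> below f g}"

definition D :: "nat set set \<Rightarrow> nat set \<Rightarrow> nat set \<Rightarrow> nat" where
  "D T f g = card ((anc T f - anc T g) \<union> (anc T g - anc T f))"

lemma D_sym: "D T f g = D T g f"
  unfolding D_def by (simp add: Un_commute)

lemma D_self: "D T f f = 0" by (simp add: D_def)

lemma D_triangle: assumes "finite T" shows "D T f h \<le> D T f g + D T g h"
proof -
  let ?A = "anc T f" and ?B = "anc T g" and ?C = "anc T h"
  have fin: "finite ?A" "finite ?B" "finite ?C" using assms by (auto simp: anc_def)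
  have "(?A - ?C) \<union> (?C - ?A) \<subseteq> ((?A - ?B) \<union> (?B - ?A)) \<union> ((?B - ?C) \<union> (?C - ?B))" by auto
  hence "D T f h \<le> card (((?A - ?B) \<union> (?B - ?A)) \<union> ((?B - ?C) \<union> (?C - ?B)))"
    unfolding D_def using fin by (intro card_mono) auto
  also have "\<dots> \<le> D T f g + D T g h" unfolding D_def by (rule card_Un_le)
  finally show ?thesis .
qed

lemma card_symdiff:
  assumes "finite A" "finite B"
  shows "card ((A - B) \<union> (B - A)) + 2 * card (A \<inter> B) = card A + card B"
proof -
  have "card ((A - B) \<union> (B - A)) = card (A - B) + card (B - A)"
    using assms by (intro card_Un_disjoint) auto
  moreover have "card (A - B) + card (A \<inter> B) = card A"
    using assms by (metis card_Diff_subset_Int card_mono inf_le1 le_add_diff_inverse2 finite_Int Int_commute inf_commute)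
  moreover have "card (B - A) + card (A \<inter> B) = card B"
    using assms by (metis card_Diff_subset_Int card_mono inf_le2 le_add_diff_inverse2 finite_Int Int_commute)
  ultimately show ?thesis by simp
qed


lemma walk_single: "walk T [x] \<longleftrightarrow> x \<in> T"
  by (simp add: walk_def)

lemma walk_Cons: "walk T (x # y # ys) \<longleftrightarrow> x \<in> T \<and> 2 \<le> card (x \<inter> y) \<and> walk T (y # ys)"
proof
  assume w: "walk T (x # y # ys)"
  have a: "\<forall>i. Suc i < length (x # y # ys) \<longrightarrow> 2 \<le> card ((x # y # ys) ! i \<inter> (x # y # ys) ! Suc i)"
    using w by (simp add: walk_def)
  have "2 \<le> card (x \<inter> y)" using a[rule_format, of 0] by simp
  moreover have "\<forall>i. Suc i < length (y # ys) \<longrightarrow> 2 \<le> card ((y # ys) ! i \<inter> (y # ys) ! Suc i)"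
  proof (intro allI impI)
    fix i assume "Suc i < length (y # ys)"
    thus "2 \<le> card ((y # ys) ! i \<inter> (y # ys) ! Suc i)" using a[rule_format, of "Suc i"] by simp
  qed
  ultimately show "x \<in> T \<and> 2 \<le> card (x \<inter> y) \<and> walk T (y # ys)" using w by (simp add: walk_def)
next
  assume h: "x \<in> T \<and> 2 \<le> card (x \<inter> y) \<and> walk T (y # ys)"
  have a: "\<forall>i. Suc i < length (y # ys) \<longrightarrow> 2 \<le> card ((y # ys) ! i \<inter> (y # ys) ! Suc i)"
    using h by (simp add: walk_def)
  have "\<forall>i. Suc i < length (x # y # ys) \<longrightarrow> 2 \<le> card ((x # y # ys) ! i \<inter> (x # y # ys) ! Suc i)"
  proof (intro allI impI)
    fix i assume i: "Suc i < length (x # y # ys)"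
    show "2 \<le> card ((x # y # ys) ! i \<inter> (x # y # ys) ! Suc i)"
    proof (cases i)
      case 0 thus ?thesis using h by simp
    next
      case (Suc j) thus ?thesis using a[rule_format, of j] i by simp
    qed
  qed
  thus "walk T (x # y # ys)" using h by (simp add: walk_def)
qed

lemma walk_snoc: "ws \<noteq> [] \<Longrightarrow> walk T (ws @ [y]) \<longleftrightarrow> walk T ws \<and> y \<in> T \<and> 2 \<le> card (last ws \<inter> y)"
proof (induction ws)
  case Nil thus ?case by simp
next
  case (Cons a ws)
  show ?case
  proof (cases ws)
    case Nil thus ?thesis by (auto simp: walk_Cons walk_single)
  next
    case (Cons b rest)
    have "walk T ((a # ws) @ [y]) = walk T (a # b # (rest @ [y]))" using Cons by simp
    also have "\<dots> \<longleftrightarrow> a \<in> T \<and> 2 \<le> card (a \<inter> b) \<and> walk T (b # rest @ [y])" by (rule walk_Cons)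
    also have "walk T (b # rest @ [y]) \<longleftrightarrow> walk T ws \<and> y \<in> T \<and> 2 \<le> card (last ws \<inter> y)"
      using Cons.IH Cons by simp
    finally show ?thesis using Cons by (auto simp: walk_Cons)
  qed
qed

locale gt =
  fixes T :: "nat set set" and \<rho> :: "nat set"
  assumes gd: "good T \<rho>"
begin

lemma fin: "finite T" and rootin: "\<rho> \<in> T" and lamT: "lam T"
  using gd by (auto simp: good_def)

lemma tri: "f \<in> T \<Longrightarrow> istri f"
  using gd by (auto simp: good_def)

lemma root: "f \<in> T \<Longrightarrow> f = \<rho> \<or> below f \<rho>"
  using gd by (auto simp: good_def)

lemma par: "f \<in> T \<Longrightarrow> f \<noteq> \<rho> \<Longrightarrow> \<exists>p\<in>T. below f p \<and> Min f \<in> p \<and> Max f \<in> p"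
  using gd by (auto simp: good_def)

lemma lamD: "f \<in> T \<Longrightarrow> g \<in> T \<Longrightarrow> f \<noteq> g \<Longrightarrow> below f g \<or> below g f \<or> Max f \<le> Min g \<or> Max g \<le> Min f"
  using lamT by (auto simp: lam_def)

lemma anc_self: "f \<in> T \<Longrightarrow> f \<in> anc T f" by (simp add: anc_def)
lemma anc_sub: "anc T f \<subseteq> T" by (auto simp: anc_def)
lemma finite_anc: "finite (anc T f)" using fin finite_subset[OF anc_sub] by blast

lemma anc_mono: "x \<in> T \<Longrightarrow> y \<in> T \<Longrightarrow> below x y \<Longrightarrow> anc T y \<subseteq> anc T x"
  unfolding anc_def using below_trans tri by blast

lemma anc_notin: "x \<in> T \<Longrightarrow> y \<in> T \<Longrightarrow> below x y \<Longrightarrow> x \<notin> anc T y"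
  unfolding anc_def using below_asym below_irrefl tri by blast

lemma anc_card_less: "x \<in> T \<Longrightarrow> y \<in> T \<Longrightarrow> below x y \<Longrightarrow> card (anc T y) < card (anc T x)"
proof -
  assume a: "x \<in> T" "y \<in> T" "below x y"
  have "anc T y \<subset> anc T x" using anc_mono[OF a] anc_notin[OF a] anc_self[OF a(1)] by blast
  thus ?thesis using finite_anc by (simp add: psubset_card_mono)
qed

lemma anc_in_imp: "f \<in> T \<Longrightarrow> g \<in> anc T f \<Longrightarrow> anc T g \<subseteq> anc T f"
  using anc_mono unfolding anc_def by auto

lemma root_anc: "f \<in> T \<Longrightarrow> \<rho> \<in> anc T f"
  using root rootin by (auto simp: anc_def)

lemma anc_bounds: "t \<in> T \<Longrightarrow> x \<in> anc T t \<Longrightarrow> Min x \<le> Min t \<and> Max t \<le> Max x"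
  unfolding anc_def using below_bounds tri by auto

lemma comparable:
  assumes t: "t \<in> T" and x: "x \<in> anc T t" and y: "y \<in> anc T t"
  shows "x \<in> anc T y \<or> y \<in> anc T x"
proof (cases "x = y")
  case True thus ?thesis using x anc_self anc_sub by auto
next
  case False
  have xT: "x \<in> T" and yT: "y \<in> T" using x y anc_sub by auto
  have bx: "Min x \<le> Min t \<and> Max t \<le> Max x" and byy: "Min y \<le> Min t \<and> Max t \<le> Max y"
    using anc_bounds t x y by auto
  have "Min t < Max t" using istri_D[OF tri[OF t]] by simp
  hence "\<not> (Max x \<le> Min y \<or> Max y \<le> Min x)" using bx byy by linarith
  then consider "below x y" | "below y x"
    using lamD[OF xT yT False] by blast
  thus ?thesis using xT yT by cases (auto simp: anc_def)
qed

lemma anc_eq_imp: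
  assumes fT: "f \<in> T" and gT: "g \<in> T" and e: "anc T f = anc T g" shows "f = g"
proof (rule ccontr)
  assume ne: "f \<noteq> g"
  have "f \<in> anc T g" using e anc_self fT by auto
  hence "below g f" using ne by (auto simp: anc_def)
  moreover have "g \<in> anc T f" using e anc_self gT by auto
  hence "below f g" using ne by (auto simp: anc_def)
  ultimately show False using below_asym tri fT gT by blast
qed

lemma D_zero: "f \<in> T \<Longrightarrow> g \<in> T \<Longrightarrow> D T f g = 0 \<Longrightarrow> f = g"
proof -
  assume a: "f \<in> T" "g \<in> T" "D T f g = 0"
  have "finite ((anc T f - anc T g) \<union> (anc T g - anc T f))" using finite_anc by auto
  hence "anc T f = anc T g" using a(3) unfolding D_def by auto
  thus ?thesis using anc_eq_imp a by blast
qed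

lemma ends_in_parent:
  assumes fT: "f \<in> T" and gT: "g \<in> T" and b: "below f g" and c: "2 \<le> card (f \<inter> g)"
  shows "Min f \<in> g \<and> Max f \<in> g"
proof -
  have tf: "istri f" and tg: "istri g" using tri fT gT by auto
  have sub: "f \<inter> g \<subseteq> {Min f, Max f}"
  proof
    fix x assume x: "x \<in> f \<inter> g"
    have xf: "Min f \<le> x" "x \<le> Max f" using istri_mem[OF tf] x by auto
    have xg: "x = Min g \<or> x = mid g \<or> x = Max g" using istri_mem[OF tg] x by auto
    have "x = Min f \<or> x = Max f"
      using b xf xg istri_D(2,3)[OF tg] unfolding below_def by (elim disjE conjE; linarith)
    thus "x \<in> {Min f, Max f}" by simp
  qed
  have "card {Min f, Max f} \<le> 2" by (simp add: card_insert_le_m1)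
  hence "f \<inter> g = {Min f, Max f}"
    using card_seteq[OF _ sub] c by simp
  thus ?thesis by auto
qed

lemma parent_anc:
  assumes fT: "f \<in> T" and pT: "p \<in> T" and b: "below f p" and e: "Min f \<in> p" "Max f \<in> p"
  shows "anc T f = insert f (anc T p)" "f \<notin> anc T p"
proof -
  show "f \<notin> anc T p" using anc_notin fT pT b by blast
  have tf: "istri f" and tp: "istri p" using tri fT pT by auto
  show "anc T f = insert f (anc T p)"
  proof
    show "insert f (anc T p) \<subseteq> anc T f" using anc_self anc_mono fT pT b by auto
    show "anc T f \<subseteq> insert f (anc T p)"
    proof
      fix h assume h: "h \<in> anc T f"
      show "h \<in> insert f (anc T p)"
      proof (cases "h = f \<or> h = p")
        case True thus ?thesis using anc_self pT by auto
      next
        case False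
        have hT: "h \<in> T" and fh: "below f h" using h False by (auto simp: anc_def)
        have th: "istri h" using tri hT by auto
        have mf: "Min f = Min p \<or> Min f = mid p \<or> Min f = Max p" "Max f = Min p \<or> Max f = mid p \<or> Max f = Max p"
          using istri_mem[OF tp] e by auto
        have "\<not> below h p"
        proof
          assume hp: "below h p"
          show False using mf b fh hp istri_D[OF tf] istri_D[OF tp] istri_D[OF th]
            unfolding below_def by linarith
        qed
        moreover have "\<not> (Max p \<le> Min h \<or> Max h \<le> Min p)"
          using below_bounds[OF tf tp b] below_bounds[OF tf th fh] istri_D[OF tf] by linarith
        ultimately have "below p h" using lamD[OF pT hT] False by auto
        thus ?thesis using hT by (auto simp: anc_def)
      qed
    qed
  qed
qed

lemma D_adj:
  assumes fT: "f \<in> T" and gT: "g \<in> T" and c: "2 \<le> card (f \<inter> g)"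
  shows "D T f g \<le> 1"
proof -
  have one: "D T x y = 1" if xT: "x \<in> T" and yT: "y \<in> T" and b: "below x y" and cc: "2 \<le> card (x \<inter> y)" for x y
  proof -
    have e: "Min x \<in> y" "Max x \<in> y" using ends_in_parent[OF xT yT b cc] by auto
    have a: "anc T x = insert x (anc T y)" "x \<notin> anc T y" using parent_anc[OF xT yT b e] by auto
    have "(anc T x - anc T y) \<union> (anc T y - anc T x) = {x}" using a by auto
    thus ?thesis by (simp add: D_def)
  qed
  show ?thesis
  proof (cases "f = g")
    case True thus ?thesis by (simp add: D_self)
  next
    case False
    have tf: "istri f" and tg: "istri g" using tri fT gT by auto
    have "\<not> (Max f \<le> Min g \<or> Max g \<le> Min f)"
    proof
      assume "Max f \<le> Min g \<or> Max g \<le> Min f"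
      hence "\<exists>z. f \<inter> g \<subseteq> {z}"
      proof
        assume "Max f \<le> Min g"
        hence "f \<inter> g \<subseteq> {Max f}" using istri_mem(2,3)[OF tf] istri_mem(2,3)[OF tg] by fastforce
        thus ?thesis by blast
      next
        assume "Max g \<le> Min f"
        hence "f \<inter> g \<subseteq> {Max g}" using istri_mem(2,3)[OF tf] istri_mem(2,3)[OF tg] by fastforce
        thus ?thesis by blast
      qed
      then obtain z where "f \<inter> g \<subseteq> {z}" by blast
      hence "card (f \<inter> g) \<le> card {z}" by (intro card_mono) auto
      thus False using c by simp
    qed
    then consider "below f g" | "below g f" using lamD[OF fT gT False] by auto
    thus ?thesis
    proof cases
      case 1 thus ?thesis using one[OF fT gT 1 c] by simp
    next
      case 2 thus ?thesis using one[OF gT fT 2] c D_sym[of T f g] by (simp add: Int_commute)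
    qed
  qed
qed

end


definition Rv :: "nat set set \<Rightarrow> nat \<Rightarrow> nat \<Rightarrow> nat \<Rightarrow> bool" where
  "Rv T s a b \<longleftrightarrow> (\<exists>f\<in>T. \<exists>g\<in>T. a \<in> f \<and> b \<in> g \<and> D T f g < s)"

definition Rt :: "nat set set \<Rightarrow> nat \<Rightarrow> nat set \<Rightarrow> nat set \<Rightarrow> bool" where
  "Rt T s f g \<longleftrightarrow> D T f g < s"

context gt begin

lemma parent_ex:
  assumes fT: "f \<in> T" and nr: "f \<noteq> \<rho>"
  shows "\<exists>p\<in>T. anc T f = insert f (anc T p) \<and> f \<notin> anc T p \<and> 2 \<le> card (f \<inter> p)"
proof -
  obtain p where p: "p \<in> T" "below f p" "Min f \<in> p" "Max f \<in> p" using par[OF fT nr] by blast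
  have a: "anc T f = insert f (anc T p)" "f \<notin> anc T p" using parent_anc[OF fT p] by auto
  have tf: "istri f" using tri fT by auto
  have "{Min f, Max f} \<subseteq> f \<inter> p" using p istri_memI[OF tf] by auto
  moreover have "card {Min f, Max f} = 2" using istri_D[OF tf] by simp
  moreover have "finite (f \<inter> p)" using istri_D(4)[OF tf] by simp
  ultimately have "2 \<le> card (f \<inter> p)" by (metis card_mono)
  thus ?thesis using a p by blast
qed

lemma D_step:
  assumes a: "anc T f = insert f (anc T p)" and b: "f \<notin> anc T p" and c: "f \<notin> anc T g"
  shows "D T f g = Suc (D T p g)"
proof -
  have e: "(anc T f - anc T g) \<union> (anc T g - anc T f) = insert f ((anc T p - anc T g) \<union> (anc T g - anc T p))"
    using a c by auto
  have "f \<notin> (anc T p - anc T g) \<union> (anc T g - anc T p)" using b c by auto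
  moreover have "finite ((anc T p - anc T g) \<union> (anc T g - anc T p))" using finite_anc by auto
  ultimately show ?thesis unfolding D_def e by simp
qed

lemma walk_exists:
  "f \<in> T \<Longrightarrow> g \<in> T \<Longrightarrow> \<exists>ws. walk T ws \<and> hd ws = f \<and> last ws = g \<and> length ws = Suc (D T f g)"
proof (induction "D T f g" arbitrary: f g rule: less_induct)
  case less
  show ?case
  proof (cases "f = g")
    case True
    thus ?thesis using less.prems by (intro exI[of _ "[f]"]) (simp add: walk_single D_self)
  next
    case False
    have "f \<notin> anc T g \<or> g \<notin> anc T f"
    proof (rule ccontr)
      assume "\<not> ?thesis"
      hence "below g f" "below f g" using False by (auto simp: anc_def)
      thus False using below_asym tri less.prems by blast
    qed
    thus ?thesis
    proof
      assume fg: "f \<notin> anc T g"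
      have "f \<noteq> \<rho>" using fg root_anc less.prems by auto
      then obtain p where p: "p \<in> T" "anc T f = insert f (anc T p)" "f \<notin> anc T p" "2 \<le> card (f \<inter> p)"
        using parent_ex less.prems by blast
      have Dfg: "D T f g = Suc (D T p g)" using D_step[OF p(2,3) fg] .
      obtain ws where ws: "walk T ws" "hd ws = p" "last ws = g" "length ws = Suc (D T p g)"
        using less.hyps[of p g] Dfg p(1) less.prems by auto
      obtain rest where wr: "ws = p # rest" using ws by (cases ws) auto
      have "walk T (f # ws)" using ws(1) wr p(4) less.prems by (simp add: walk_Cons)
      moreover have "last (f # ws) = g" using ws wr by simp
      ultimately show ?thesis using ws Dfg by (intro exI[of _ "f # ws"]) simp
    next
      assume gf: "g \<notin> anc T f"
      have "g \<noteq> \<rho>" using gf root_anc less.prems by auto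
      then obtain q where q: "q \<in> T" "anc T g = insert g (anc T q)" "g \<notin> anc T q" "2 \<le> card (g \<inter> q)"
        using parent_ex less.prems by blast
      have Dfg: "D T f g = Suc (D T f q)" using D_step[OF q(2,3) gf] D_sym by metis
      obtain ws where ws: "walk T ws" "hd ws = f" "last ws = q" "length ws = Suc (D T f q)"
        using less.hyps[of f q] Dfg q(1) less.prems by auto
      have ne: "ws \<noteq> []" using ws by auto
      have "walk T (ws @ [g])" using walk_snoc[OF ne] ws q less.prems by (simp add: Int_commute)
      thus ?thesis using ws Dfg ne by (intro exI[of _ "ws @ [g]"]) simp
    qed
  qed
qed

lemma walk_lower: "walk T ws \<Longrightarrow> Suc (D T (hd ws) (last ws)) \<le> length ws"
proof (induction ws)
  case Nil thus ?case by (simp add: walk_def)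
next
  case (Cons x ws)
  show ?case
  proof (cases ws)
    case Nil thus ?thesis by (simp add: D_self)
  next
    case (Cons y ys)
    have w: "x \<in> T" "2 \<le> card (x \<inter> y)" "walk T (y # ys)" using Cons.prems Cons by (auto simp: walk_Cons)
    have yT: "y \<in> T" using w(3) by (simp add: walk_def)
    have "D T x (last ws) \<le> D T x y + D T y (last ws)" using D_triangle fin by blast
    moreover have "D T x y \<le> 1" using D_adj w yT by blast
    moreover have "Suc (D T y (last ws)) \<le> length ws" using Cons.IH w(3) Cons by simp
    ultimately show ?thesis using Cons by simp
  qed
qed

lemma walk_hd_last: "walk T ws \<Longrightarrow> hd ws \<in> T \<and> last ws \<in> T"
  by (auto simp: walk_def)

lemma tri_dist_eq: "f \<in> T \<Longrightarrow> g \<in> T \<Longrightarrow> tri_dist T f g = D T f g"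
  unfolding tri_dist_def
proof (rule Least_equality)
  assume "f \<in> T" "g \<in> T"
  thus "\<exists>ws. walk T ws \<and> hd ws = f \<and> last ws = g \<and> length ws = D T f g + 1"
    using walk_exists by simp
next
  fix y assume "\<exists>ws. walk T ws \<and> hd ws = f \<and> last ws = g \<and> length ws = y + 1"
  then obtain ws where "walk T ws" "hd ws = f" "last ws = g" "length ws = y + 1" by blast
  thus "D T f g \<le> y" using walk_lower by fastforce
qed

lemma vert_dist_ge:
  assumes v: "v \<in> \<Union>T" and w: "w \<in> \<Union>T"
  shows "k \<le> vert_dist T v w \<longleftrightarrow> (\<forall>f\<in>T. \<forall>g\<in>T. v \<in> f \<longrightarrow> w \<in> g \<longrightarrow> k \<le> Suc (D T f g))"
proof -
  define P where "P = (\<lambda>p. \<exists>ws. walk T ws \<and> v \<in> hd ws \<and> w \<in> last ws \<and> length ws = p)"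
  have vd: "vert_dist T v w = (LEAST p. P p)" by (simp add: vert_dist_def P_def)
  have Pw: "P (Suc (D T f g))" if "f \<in> T" "g \<in> T" "v \<in> f" "w \<in> g" for f g
    using walk_exists[OF that(1,2)] that(3,4) unfolding P_def by auto
  obtain f0 g0 where fg0: "f0 \<in> T" "g0 \<in> T" "v \<in> f0" "w \<in> g0" using v w by auto
  have ex: "P (LEAST p. P p)" using Pw[OF fg0] by (rule LeastI)
  show ?thesis
  proof
    assume k: "k \<le> vert_dist T v w"
    show "\<forall>f\<in>T. \<forall>g\<in>T. v \<in> f \<longrightarrow> w \<in> g \<longrightarrow> k \<le> Suc (D T f g)"
    proof (intro ballI impI)
      fix f g assume "f \<in> T" "g \<in> T" "v \<in> f" "w \<in> g"
      hence "(LEAST p. P p) \<le> Suc (D T f g)" using Pw by (intro Least_le) auto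
      thus "k \<le> Suc (D T f g)" using k vd by simp
    qed
  next
    assume h: "\<forall>f\<in>T. \<forall>g\<in>T. v \<in> f \<longrightarrow> w \<in> g \<longrightarrow> k \<le> Suc (D T f g)"
    obtain ws where ws: "walk T ws" "v \<in> hd ws" "w \<in> last ws" "length ws = (LEAST p. P p)"
      using ex unfolding P_def by blast
    have "k \<le> Suc (D T (hd ws) (last ws))" using h walk_hd_last[OF ws(1)] ws by blast
    also have "\<dots> \<le> length ws" using walk_lower ws(1) .
    finally show "k \<le> vert_dist T v w" using ws vd by simp
  qed
qed

lemma vert_scat_iff:
  assumes B: "B \<subseteq> \<Union>T"
  shows "vert_scattered T (Suc s) B \<longleftrightarrow> indep (Rv T s) B"
proof -
  have key: "Suc s \<le> vert_dist T v w \<longleftrightarrow> \<not> Rv T s v w" if "v \<in> B" "w \<in> B" for v w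
  proof -
    have "v \<in> \<Union>T" "w \<in> \<Union>T" using that B by auto
    thus ?thesis by (simp add: vert_dist_ge Rv_def not_less)
  qed
  show ?thesis unfolding vert_scattered_def indep_def using key by auto
qed

lemma tri_scat_iff:
  assumes B: "B \<subseteq> T"
  shows "tri_scattered T s B \<longleftrightarrow> indep (Rt T s) B"
proof -
  have key: "s \<le> tri_dist T f g \<longleftrightarrow> \<not> Rt T s f g" if "f \<in> B" "g \<in> B" for f g
  proof -
    have "f \<in> T" "g \<in> T" using that B by auto
    thus ?thesis using tri_dist_eq by (simp add: Rt_def not_less)
  qed
  show ?thesis unfolding tri_scattered_def indep_def using key by auto
qed

end


context gt begin

lemma mid_in_other:
  assumes fT: "f \<in> T" and gT: "g \<in> T" and ne: "f \<noteq> g" and m: "mid g \<in> f"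
  shows "below f g"
proof (rule ccontr)
  assume nb: "\<not> below f g"
  have tf: "istri f" and tg: "istri g" using tri fT gT by auto
  have mf: "mid g = Min f \<or> mid g = mid f \<or> mid g = Max f" "Min f \<le> mid g" "mid g \<le> Max f"
    using istri_mem[OF tf m] by auto
  have "below g f \<or> Max f \<le> Min g \<or> Max g \<le> Min f" using lamD[OF fT gT ne] nb by auto
  thus False using mf istri_D(2,3)[OF tf] istri_D(2,3)[OF tg] unfolding below_def
    by (elim disjE conjE; linarith)
qed

lemma anc_inter:
  assumes tT: "t \<in> T" and gT: "g \<in> T"
  shows "\<exists>a\<in>anc T t. anc T t \<inter> anc T g = anc T a"
proof -
  let ?U = "anc T t \<inter> anc T g"
  have finU: "finite ?U" using finite_anc by auto
  have neU: "?U \<noteq> {}" using root_anc tT gT by auto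
  obtain a where a: "a \<in> ?U" "card (anc T a) = Max ((\<lambda>x. card (anc T x)) ` ?U)"
  proof -
    have "Max ((\<lambda>x. card (anc T x)) ` ?U) \<in> (\<lambda>x. card (anc T x)) ` ?U"
      using finU neU by (intro Max_in) auto
    then obtain x where "x \<in> ?U" "Max ((\<lambda>x. card (anc T x)) ` ?U) = card (anc T x)" by blast
    thus ?thesis using that by simp
  qed
  have amax: "card (anc T x) \<le> card (anc T a)" if "x \<in> ?U" for x
    using a(2) finU that by simp
  have aT: "a \<in> T" using a anc_sub by auto
  have "anc T a = ?U"
  proof
    show "anc T a \<subseteq> ?U" using anc_in_imp tT gT a(1) by auto
    show "?U \<subseteq> anc T a"
    proof
      fix x assume x: "x \<in> ?U"
      have xT: "x \<in> T" using x anc_sub by auto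
      have "x \<in> anc T a \<or> a \<in> anc T x" using comparable[OF tT] x a(1) by auto
      thus "x \<in> anc T a"
      proof
        assume "a \<in> anc T x"
        hence "a = x \<or> below x a" by (auto simp: anc_def)
        thus ?thesis
        proof
          assume "below x a"
          hence "card (anc T a) < card (anc T x)" using anc_card_less xT aT by blast
          thus ?thesis using amax[OF x] by simp
        qed (use anc_self aT in auto)
      qed
    qed
  qed
  thus ?thesis using a(1) by auto
qed

lemma D_formula: "D T f g + 2 * card (anc T f \<inter> anc T g) = card (anc T f) + card (anc T g)"
  unfolding D_def using card_symdiff finite_anc by blast

definition deepest :: "nat set \<Rightarrow> bool" where
  "deepest t \<longleftrightarrow> t \<in> T \<and> (\<forall>h\<in>T. card (anc T h) \<le> card (anc T t))"

lemma deep_nobelow: "deepest t \<Longrightarrow> g \<in> T \<Longrightarrow> \<not> below g t"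
  using anc_card_less unfolding deepest_def by fastforce

lemma deep_notanc: "deepest t \<Longrightarrow> g \<in> T \<Longrightarrow> g \<noteq> t \<Longrightarrow> t \<notin> anc T g"
  using deep_nobelow by (auto simp: anc_def)

lemma mid_private: "deepest t \<Longrightarrow> f \<in> T \<Longrightarrow> mid t \<in> f \<Longrightarrow> f = t"
  using mid_in_other deep_nobelow unfolding deepest_def by blast

lemma ball_clique:
  assumes dt: "deepest t" and gT: "g \<in> T" and hT: "h \<in> T"
    and dg: "D T t g < s" and dh: "D T t h < s"
  shows "D T g h < s"
proof -
  have tT: "t \<in> T" using dt by (simp add: deepest_def)
  obtain a where a: "a \<in> anc T t" "anc T t \<inter> anc T g = anc T a" using anc_inter[OF tT gT] by blast
  obtain b where b: "b \<in> anc T t" "anc T t \<inter> anc T h = anc T b" using anc_inter[OF tT hT] by blast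
  have bT: "b \<in> T" and aT: "a \<in> T" using a b anc_sub by auto
  have cg: "card (anc T g) \<le> card (anc T t)" and ch: "card (anc T h) \<le> card (anc T t)"
    using dt gT hT by (auto simp: deepest_def)
  have fg: "D T t g + 2 * card (anc T a) = card (anc T t) + card (anc T g)" using D_formula a(2) by metis
  have fh: "D T t h + 2 * card (anc T b) = card (anc T t) + card (anc T h)" using D_formula b(2) by metis
  have fgh: "D T g h + 2 * card (anc T g \<inter> anc T h) = card (anc T g) + card (anc T h)" by (rule D_formula)
  have finI: "finite (anc T g \<inter> anc T h)" using finite_anc by auto
  have "a \<in> anc T b \<or> b \<in> anc T a" using comparable[OF tT a(1) b(1)] .
  thus ?thesis
  proof
    assume "b \<in> anc T a"
    hence "anc T b \<subseteq> anc T a" using anc_in_imp aT by blast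
    hence "anc T b \<subseteq> anc T g \<inter> anc T h" using a(2) b(2) by auto
    hence "card (anc T b) \<le> card (anc T g \<inter> anc T h)" using card_mono finI by blast
    thus ?thesis using fh fgh cg dh by linarith
  next
    assume "a \<in> anc T b"
    hence "anc T a \<subseteq> anc T b" using anc_in_imp bT by blast
    hence "anc T a \<subseteq> anc T g \<inter> anc T h" using a(2) b(2) by auto
    hence "card (anc T a) \<le> card (anc T g \<inter> anc T h)" using card_mono finI by blast
    thus ?thesis using fg fgh ch dg by linarith
  qed
qed

lemma closed_union_card:
  "S \<subseteq> T \<Longrightarrow> u \<in> S \<Longrightarrow> (\<forall>g\<in>S. g = u \<or> below g u) \<Longrightarrow>
   (\<forall>g\<in>S. g \<noteq> u \<longrightarrow> (\<exists>p\<in>S. below g p \<and> Min g \<in> p \<and> Max g \<in> p)) \<Longrightarrow>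
   card (\<Union>S) = card S + 2"
proof (induction "card S" arbitrary: S rule: less_induct)
  case less
  have finS: "finite S" using less.prems(1) fin finite_subset by blast
  show ?case
  proof (cases "S = {u}")
    case True
    thus ?thesis using istri_D(5)[OF tri] less.prems by auto
  next
    case False
    let ?V = "S - {u}"
    have neV: "?V \<noteq> {}" using False less.prems(2) by auto
    have finV: "finite ?V" using finS by simp
    obtain g where g: "g \<in> ?V" "card (anc T g) = Max ((\<lambda>x. card (anc T x)) ` ?V)"
    proof -
    have "Max ((\<lambda>x. card (anc T x)) ` ?V) \<in> (\<lambda>x. card (anc T x)) ` ?V"
      using finV neV by (intro Max_in) auto
    then obtain x where "x \<in> ?V" "Max ((\<lambda>x. card (anc T x)) ` ?V) = card (anc T x)" by blast
    thus ?thesis using that by simp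
  qed
    have gmax: "card (anc T x) \<le> card (anc T g)" if "x \<in> ?V" for x
      using g(2) finV that by simp
    have gT: "g \<in> T" using g less.prems(1) by auto
    let ?S' = "S - {g}"
    have cS': "card ?S' < card S" using card_Diff1_less[OF finS, of g] g by auto
    have S'T: "?S' \<subseteq> T" using less.prems(1) by auto
    have uS': "u \<in> ?S'" using g less.prems(2) by auto
    have top': "\<forall>h\<in>?S'. h = u \<or> below h u" using less.prems(3) by auto
    have nbg: "\<not> below h g" if "h \<in> ?V" for h
    proof
      assume "below h g"
      hence "card (anc T g) < card (anc T h)" using anc_card_less gT that less.prems(1) by blast
      thus False using gmax[OF that] by simp
    qed
    have clo': "\<forall>h\<in>?S'. h \<noteq> u \<longrightarrow> (\<exists>p\<in>?S'. below h p \<and> Min h \<in> p \<and> Max h \<in> p)"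
    proof (intro ballI impI)
      fix h assume h: "h \<in> ?S'" "h \<noteq> u"
      obtain p where p: "p \<in> S" "below h p" "Min h \<in> p" "Max h \<in> p" using less.prems(4) h by blast
      have "p \<noteq> g" using nbg h p by auto
      thus "\<exists>p\<in>?S'. below h p \<and> Min h \<in> p \<and> Max h \<in> p" using p by auto
    qed
    have IH: "card (\<Union>?S') = card ?S' + 2" using less.hyps[OF cS' S'T uS' top' clo'] .
    obtain p where p: "p \<in> S" "below g p" "Min g \<in> p" "Max g \<in> p" using less.prems(4) g by blast
    have pg: "p \<noteq> g" using p below_irrefl tri gT by blast
    have tg: "istri g" using tri gT by auto
    have U: "\<Union>S = insert (mid g) (\<Union>?S')"
    proof
      show "\<Union>S \<subseteq> insert (mid g) (\<Union>?S')"
      proof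
        fix x assume "x \<in> \<Union>S"
        then obtain h where h: "h \<in> S" "x \<in> h" by blast
        show "x \<in> insert (mid g) (\<Union>?S')"
        proof (cases "h = g")
          case True
          hence "x = Min g \<or> x = mid g \<or> x = Max g" using istri_mem[OF tg] h by auto
          thus ?thesis using p pg by auto
        qed (use h in auto)
      qed
      show "insert (mid g) (\<Union>?S') \<subseteq> \<Union>S" using g istri_memI[OF tg] by auto
    qed
    have nm: "mid g \<notin> \<Union>?S'"
    proof
      assume "mid g \<in> \<Union>?S'"
      then obtain f where f: "f \<in> S" "f \<noteq> g" "mid g \<in> f" by blast
      have fT: "f \<in> T" using f less.prems(1) by auto
      have fb: "below f g" using mid_in_other[OF fT gT f(2,3)] .
      show False
      proof (cases "f = u")
        case True
        have "below g u" using less.prems(3) g by auto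
        thus False using fb True below_asym tri fT gT by blast
      next
        case False
        thus False using nbg f fb by auto
      qed
    qed
    have finU': "finite (\<Union>?S')" using finS S'T tri istri_D(4) by auto
    have "card (\<Union>S) = Suc (card (\<Union>?S'))" using U nm finU' by simp
    moreover have "card S = Suc (card ?S')" using card_Suc_Diff1[OF finS, of g] g by auto
    ultimately show ?thesis using IH by simp
  qed
qed

end


context gt begin

lemma ball_card:
  assumes dt: "deepest t" and s: "0 < s"
  shows "card (\<Union>{g\<in>T. D T t g < s}) = card {g\<in>T. D T t g < s} + 2"
proof -
  let ?S = "{g\<in>T. D T t g < s}"
  have tT: "t \<in> T" using dt by (simp add: deepest_def)
  let ?W = "?S \<inter> anc T t"
  have tW: "t \<in> ?W" using tT s anc_self by (simp add: D_self)
  have finW: "finite ?W" using finite_anc by auto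
  obtain u where u: "u \<in> ?W" "card (anc T u) = Min ((\<lambda>x. card (anc T x)) ` ?W)"
  proof -
    have "Min ((\<lambda>x. card (anc T x)) ` ?W) \<in> (\<lambda>x. card (anc T x)) ` ?W"
      using finW tW by (intro Min_in) auto
    then obtain x where "x \<in> ?W" "Min ((\<lambda>x. card (anc T x)) ` ?W) = card (anc T x)" by blast
    thus ?thesis using that by simp
  qed
  have umin: "card (anc T u) \<le> card (anc T x)" if "x \<in> ?W" for x
    using u(2) finW that by simp
  have uT: "u \<in> T" and uat: "u \<in> anc T t" and Du: "D T t u < s" using u by auto
  have uanc: "u \<in> anc T g" if gS: "g \<in> ?S" for g
  proof -
    have gT: "g \<in> T" using gS by simp
    obtain a where a: "a \<in> anc T t" "anc T t \<inter> anc T g = anc T a" using anc_inter[OF tT gT] by blast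
    have aT: "a \<in> T" using a anc_sub by auto
    have ia: "anc T t \<inter> anc T a = anc T a" using anc_in_imp[OF tT a(1)] by auto
    have f1: "D T t a + 2 * card (anc T a) = card (anc T t) + card (anc T a)" using D_formula[of t a] ia by simp
    have f2: "D T t g + 2 * card (anc T a) = card (anc T t) + card (anc T g)" using D_formula[of t g] a(2) by simp
    have "anc T a \<subseteq> anc T g" using a(2) by auto
    hence "card (anc T a) \<le> card (anc T g)" using finite_anc card_mono by blast
    hence "D T t a \<le> D T t g" using f1 f2 by linarith
    hence aW: "a \<in> ?W" using gS a aT by auto
    have "u \<in> anc T a \<or> a \<in> anc T u" using comparable[OF tT uat a(1)] .
    hence "u \<in> anc T a"
    proof
      assume "a \<in> anc T u"
      hence "a = u \<or> below u a" by (auto simp: anc_def)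
      thus ?thesis
      proof
        assume "below u a"
        hence "card (anc T a) < card (anc T u)" using anc_card_less uT aT by blast
        thus ?thesis using umin[OF aW] by simp
      qed (use anc_self aT in auto)
    qed
    thus ?thesis using a(2) by auto
  qed
  have top: "\<forall>g\<in>?S. g = u \<or> below g u" using uanc by (auto simp: anc_def)
  have clo: "\<forall>g\<in>?S. g \<noteq> u \<longrightarrow> (\<exists>p\<in>?S. below g p \<and> Min g \<in> p \<and> Max g \<in> p)"
  proof (intro ballI impI)
    fix g assume gS: "g \<in> ?S" and gu: "g \<noteq> u"
    have gT: "g \<in> T" using gS by simp
    have gbu: "below g u" using top gS gu by auto
    have gr: "g \<noteq> \<rho>"
    proof
      assume "g = \<rho>"
      hence "below \<rho> u" using gbu by simp
      moreover have "u = \<rho> \<or> below u \<rho>" using root uT by blast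
      ultimately show False using below_asym below_irrefl tri uT rootin by blast
    qed
    obtain p where p: "p \<in> T" "below g p" "Min g \<in> p" "Max g \<in> p" using par[OF gT gr] by blast
    have pa: "anc T g = insert g (anc T p)" "g \<notin> anc T p" using parent_anc[OF gT p] by auto
    have "D T t p < s"
    proof (cases "g \<in> anc T t")
      case False
      have "D T g t = Suc (D T p t)" using D_step[OF pa False] .
      thus ?thesis using gS D_sym[of T t g] D_sym[of T t p] by simp
    next
      case True
      have "u \<in> anc T p" using uanc[OF gS] pa gu by auto
      hence uap: "anc T u \<subseteq> anc T p" using anc_in_imp p(1) by blast
      have pat: "p \<in> anc T t" using anc_in_imp[OF tT True] pa anc_self p(1) by auto
      have i1: "anc T t \<inter> anc T p = anc T p" using anc_in_imp[OF tT pat] by auto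
      have i2: "anc T t \<inter> anc T u = anc T u" using anc_in_imp[OF tT uat] by auto
      have f1: "D T t p + 2 * card (anc T p) = card (anc T t) + card (anc T p)" using D_formula[of t p] i1 by simp
      have f2: "D T t u + 2 * card (anc T u) = card (anc T t) + card (anc T u)" using D_formula[of t u] i2 by simp
      have "card (anc T u) \<le> card (anc T p)" using uap finite_anc card_mono by blast
      thus ?thesis using f1 f2 Du by linarith
    qed
    thus "\<exists>p\<in>?S. below g p \<and> Min g \<in> p \<and> Max g \<in> p" using p by auto
  qed
  show ?thesis by (rule closed_union_card) (use u top clo in auto)
qed

lemma deepest_ex:
  assumes "2 \<le> card T"
  shows "\<exists>t. deepest t \<and> t \<noteq> \<rho>"
proof -
  have ne: "T \<noteq> {}" using rootin by auto
  obtain t where t: "t \<in> T" "card (anc T t) = Max ((\<lambda>x. card (anc T x)) ` T)"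
  proof -
    have "Max ((\<lambda>x. card (anc T x)) ` T) \<in> (\<lambda>x. card (anc T x)) ` T"
      using fin ne by (intro Max_in) auto
    then obtain x where "x \<in> T" "Max ((\<lambda>x. card (anc T x)) ` T) = card (anc T x)" by blast
    thus ?thesis using that by simp
  qed
  have dt: "deepest t" using t fin by (simp add: deepest_def)
  obtain f where f: "f \<in> T" "f \<noteq> \<rho>"
  proof -
    have "T - {\<rho>} \<noteq> {}"
    proof
      assume "T - {\<rho>} = {}"
      hence "T \<subseteq> {\<rho>}" by auto
      hence "card T \<le> card {\<rho>}" by (intro card_mono) auto
      thus False using assms by simp
    qed
    thus ?thesis using that by blast
  qed
  have "below f \<rho>" using root f by blast
  hence "card (anc T \<rho>) < card (anc T f)" using anc_card_less f rootin by blast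
  moreover have "card (anc T f) \<le> card (anc T t)" using dt f by (simp add: deepest_def)
  ultimately have "t \<noteq> \<rho>" by auto
  thus ?thesis using dt by blast
qed

lemma good_remove:
  assumes dt: "deepest t" and tr: "t \<noteq> \<rho>"
  shows "good (T - {t}) \<rho>"
proof -
  have "\<forall>f\<in>T - {t}. f \<noteq> \<rho> \<longrightarrow> (\<exists>p\<in>T - {t}. below f p \<and> Min f \<in> p \<and> Max f \<in> p)"
  proof (intro ballI impI)
    fix f assume f: "f \<in> T - {t}" "f \<noteq> \<rho>"
    obtain p where p: "p \<in> T" "below f p" "Min f \<in> p" "Max f \<in> p" using par f by blast
    have "p \<noteq> t" using deep_nobelow[OF dt] p f by auto
    thus "\<exists>p\<in>T - {t}. below f p \<and> Min f \<in> p \<and> Max f \<in> p" using p by auto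
  qed
  thus ?thesis using gd tr unfolding good_def lam_def by auto
qed

lemma anc_remove:
  assumes dt: "deepest t" and g: "g \<in> T" "g \<noteq> t"
  shows "anc (T - {t}) g = anc T g"
  using deep_notanc[OF dt g] unfolding anc_def by auto

lemma D_remove:
  assumes dt: "deepest t" and f: "f \<in> T - {t}" and g: "g \<in> T - {t}"
  shows "D (T - {t}) f g = D T f g"
  using anc_remove[OF dt] f g by (simp add: D_def)

lemma union_remove:
  assumes dt: "deepest t" and tr: "t \<noteq> \<rho>"
  shows "\<Union>T = insert (mid t) (\<Union>(T - {t}))" "mid t \<notin> \<Union>(T - {t})"
    "\<exists>p\<in>T - {t}. Min t \<in> p \<and> Max t \<in> p"
proof -
  have tT: "t \<in> T" using dt by (simp add: deepest_def)
  obtain p where p: "p \<in> T" "below t p" "Min t \<in> p" "Max t \<in> p" using par[OF tT tr] by blast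
  have pt: "p \<noteq> t" using p below_irrefl tri tT by blast
  show "\<exists>p\<in>T - {t}. Min t \<in> p \<and> Max t \<in> p" using p pt by auto
  show "mid t \<notin> \<Union>(T - {t})" using mid_private[OF dt] by auto
  have tt: "istri t" using tri tT by auto
  show "\<Union>T = insert (mid t) (\<Union>(T - {t}))"
  proof
    show "\<Union>T \<subseteq> insert (mid t) (\<Union>(T - {t}))"
    proof
      fix x assume "x \<in> \<Union>T"
      then obtain h where h: "h \<in> T" "x \<in> h" by blast
      show "x \<in> insert (mid t) (\<Union>(T - {t}))"
      proof (cases "h = t")
        case True
        hence "x = Min t \<or> x = mid t \<or> x = Max t" using istri_mem[OF tt] h by auto
        thus ?thesis using p pt by auto
      qed (use h in auto)
    qed
    show "insert (mid t) (\<Union>(T - {t})) \<subseteq> \<Union>T" using tT istri_memI[OF tt] by auto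
  qed
qed

end


lemma Parts_cong:
  assumes "\<forall>a\<in>X. \<forall>b\<in>X. R a b = R' a b"
  shows "Parts R X m = Parts R' X m"
proof -
  have "indep R B = indep R' B" if "B \<subseteq> X" for B
    using assms that unfolding indep_def by blast
  moreover have "B \<subseteq> X" if "partition_on X P" "B \<in> P" for P B
    using that by (auto simp: partition_on_def)
  ultimately show ?thesis unfolding Parts_def by blast
qed

lemma clique_count:
  assumes fin: "finite X" and cl: "\<forall>a\<in>X. \<forall>b\<in>X. a \<noteq> b \<longrightarrow> R a b" and sym: "\<And>a b. R a b \<Longrightarrow> R b a"
  shows "card (Parts R X m) = (if m = card X then 1 else 0)"
  using fin cl
proof (induction X arbitrary: m rule: finite_induct)
  case empty thus ?case by (simp add: Parts_empty)
next
  case (insert x X)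
  have N: "{y\<in>X. R x y} = X" using insert.prems insert.hyps(2) by auto
  have clX: "\<forall>a\<in>X. \<forall>b\<in>X. a \<noteq> b \<longrightarrow> R a b" using insert.prems by auto
  have cl2: "\<forall>a\<in>{y\<in>X. R x y}. \<forall>b\<in>{y\<in>X. R x y}. a \<noteq> b \<longrightarrow> R a b" using clX by auto
  have c: "card (Parts R (insert x X) m) =
     (m - card X) * card (Parts R X m) + (if m = 0 then 0 else card (Parts R X (m - 1)))"
    using count_insert[OF insert.hyps(1,2) sym cl2, where m = m] unfolding N .
  show ?case
  proof (cases "X = {}")
    case True thus ?thesis using c insert.IH[OF clX] by auto
  next
    case False
    hence "card X > 0" using insert.hyps(1) by (simp add: card_gt_0_iff)
    thus ?thesis using c insert.IH[OF clX] insert.hyps by auto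
  qed
qed

lemma clique_lower:
  assumes fin: "finite X" and KX: "K \<subseteq> X" and cl: "\<forall>a\<in>K. \<forall>b\<in>K. a \<noteq> b \<longrightarrow> R a b"
    and P: "P \<in> Parts R X m"
  shows "card K \<le> m"
proof -
  have pp: "partition_on X P" "card P = m" "\<forall>B\<in>P. indep R B" using P by (auto simp: Parts_def)
  have "card {C\<in>P. C \<inter> K \<noteq> {}} = card K" using blocks_meeting_clique[OF pp(1) fin pp(3) KX cl] .
  moreover have "card {C\<in>P. C \<inter> K \<noteq> {}} \<le> card P"
    using finite_elements[OF fin pp(1)] by (intro card_mono) auto
  ultimately show ?thesis using pp(2) by simp
qed

lemma Rv_sym: "Rv T s a b \<Longrightarrow> Rv T s b a"
  unfolding Rv_def using D_sym by metis

lemma Rt_sym: "Rt T s a b \<Longrightarrow> Rt T s b a"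
  unfolding Rt_def using D_sym by metis

context gt begin

lemma Rv_remove:
  assumes dt: "deepest t" and tr: "t \<noteq> \<rho>" and a: "a \<in> \<Union>(T - {t})" and b: "b \<in> \<Union>(T - {t})"
  shows "Rv (T - {t}) s a b \<longleftrightarrow> Rv T s a b"
proof
  assume "Rv (T - {t}) s a b"
  then obtain f g where fg: "f \<in> T - {t}" "g \<in> T - {t}" "a \<in> f" "b \<in> g" "D (T - {t}) f g < s"
    unfolding Rv_def by blast
  thus "Rv T s a b" using D_remove[OF dt fg(1,2)] unfolding Rv_def by auto
next
  assume "Rv T s a b"
  then obtain f g where fg: "f \<in> T" "g \<in> T" "a \<in> f" "b \<in> g" "D T f g < s"
    unfolding Rv_def by blast
  have tT: "t \<in> T" using dt by (simp add: deepest_def)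
  have tt: "istri t" using tri tT by auto
  obtain p where p: "p \<in> T" "below t p" "Min t \<in> p" "Max t \<in> p" using par[OF tT tr] by blast
  have pa: "anc T t = insert t (anc T p)" "t \<notin> anc T p" using parent_anc[OF tT p] by auto
  have pt: "p \<noteq> t" using p below_irrefl tri tT by blast
  have mnot: "mid t \<notin> \<Union>(T - {t})" using union_remove[OF dt tr] by simp
  define r where "r x = (if x = t then p else x)" for x
  have rin: "r x \<in> T - {t}" if "x \<in> T" for x using that p pt by (auto simp: r_def)
  have mem: "y \<in> r x" if "x \<in> T" "y \<in> x" "y \<in> \<Union>(T - {t})" for x y
  proof (cases "x = t")
    case True
    hence "y = Min t \<or> y = mid t \<or> y = Max t" using istri_mem[OF tt] that by auto
    thus ?thesis using True mnot that p by (auto simp: r_def)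
  qed (use that in \<open>auto simp: r_def\<close>)
  have Dt: "D T t x = Suc (D T p x)" if "x \<in> T" "x \<noteq> t" for x
    using D_step[OF pa deep_notanc[OF dt that]] .
  have "D T (r f) (r g) \<le> D T f g"
  proof (cases "f = t")
    case True
    show ?thesis
    proof (cases "g = t")
      case True thus ?thesis using \<open>f = t\<close> by (simp add: r_def D_self)
    next
      case False thus ?thesis using \<open>f = t\<close> Dt[OF fg(2)] by (simp add: r_def)
    qed
  next
    case False
    show ?thesis
    proof (cases "g = t")
      case True
      have e: "D T f t = Suc (D T f p)" using Dt[OF fg(1) \<open>f \<noteq> t\<close>] D_sym[of T f t] D_sym[of T f p] by linarith
      thus ?thesis using True \<open>f \<noteq> t\<close> by (simp add: r_def)
    next
      case False thus ?thesis using \<open>f \<noteq> t\<close> by (simp add: r_def)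
    qed
  qed
  hence "D (T - {t}) (r f) (r g) < s" using D_remove[OF dt rin[OF fg(1)] rin[OF fg(2)]] fg(5) by simp
  moreover have "a \<in> r f" using mem[OF fg(1) fg(3) a] .
  moreover have "b \<in> r g" using mem[OF fg(2) fg(4) b] .
  ultimately show "Rv (T - {t}) s a b" using rin[OF fg(1)] rin[OF fg(2)] unfolding Rv_def by blast
qed

end


lemma main_count:
  assumes "good T \<rho>" "0 < s"
  shows "card (Parts (Rv T s) (\<Union>T) (m + 2)) = card (Parts (Rt T s) T m)"
  using assms
proof (induction "card T" arbitrary: T m rule: less_induct)
  case less
  interpret gt T \<rho> by (rule gt.intro) (rule less.prems(1))
  have s: "0 < s" by (rule less.prems(2))
  show ?case
  proof (cases "card T < 2")
    case True
    have T1: "T = {\<rho>}"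
    proof (rule ccontr)
      assume "T \<noteq> {\<rho>}"
      then obtain f where f: "f \<in> T" "f \<noteq> \<rho>" using rootin by blast
      have "{\<rho>, f} \<subseteq> T" using f rootin by auto
      hence "card {\<rho>, f} \<le> card T" using fin by (intro card_mono) auto
      thus False using True f by simp
    qed
    have tr: "istri \<rho>" using tri rootin by auto
    have rv: "Rv T s a b" if "a \<in> \<rho>" "b \<in> \<rho>" for a b
      unfolding Rv_def using that rootin s by (intro bexI[of _ \<rho>] conjI) (auto simp: D_self)
    have clV: "\<forall>a\<in>\<rho>. \<forall>b\<in>\<rho>. a \<noteq> b \<longrightarrow> Rv T s a b" using rv by blast
    have clT: "\<forall>a\<in>T. \<forall>b\<in>T. a \<noteq> b \<longrightarrow> Rt T s a b" using T1 by auto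
    have "card (Parts (Rv T s) \<rho> (m + 2)) = (if m + 2 = card \<rho> then 1 else 0)"
      by (rule clique_count[OF istri_D(4)[OF tr] clV Rv_sym])
    moreover have "card (Parts (Rt T s) T m) = (if m = card T then 1 else 0)"
      by (rule clique_count[OF fin clT Rt_sym])
    ultimately show ?thesis using T1 istri_D(5)[OF tr] by simp
  next
    case False
    obtain t where dt: "deepest t" and tr: "t \<noteq> \<rho>" using deepest_ex False by auto
    have tT: "t \<in> T" using dt by (simp add: deepest_def)
    let ?T' = "T - {t}"
    let ?v = "mid t"
    have g': "good ?T' \<rho>" using good_remove[OF dt tr] .
    have lt: "card ?T' < card T" using card_Diff1_less[OF fin tT] .
    have IH: "card (Parts (Rv ?T' s) (\<Union>?T') (k + 2)) = card (Parts (Rt ?T' s) ?T' k)" for k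
      using less.hyps[OF lt g' s] .
    have tt: "istri t" using tri tT by auto
    have U: "\<Union>T = insert ?v (\<Union>?T')" and vn: "?v \<notin> \<Union>?T'"
      using union_remove[OF dt tr] by auto
    obtain p where p: "p \<in> ?T'" "Min t \<in> p" "Max t \<in> p" using union_remove(3)[OF dt tr] by blast
    let ?S = "{g\<in>T. D T t g < s}"
    have finS: "finite ?S" using fin by simp
    have tS: "t \<in> ?S" using tT s by (simp add: D_self)
    have cS: "card (\<Union>?S) = card ?S + 2" using ball_card[OF dt s] .
    have NT: "{g\<in>?T'. Rt T s t g} = ?S - {t}" by (auto simp: Rt_def)
    have NV: "{y\<in>\<Union>?T'. Rv T s ?v y} = \<Union>?S - {?v}"
    proof
      show "{y\<in>\<Union>?T'. Rv T s ?v y} \<subseteq> \<Union>?S - {?v}"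
      proof
        fix y assume y: "y \<in> {y\<in>\<Union>?T'. Rv T s ?v y}"
        then obtain f g where fg: "f \<in> T" "g \<in> T" "?v \<in> f" "y \<in> g" "D T f g < s"
          unfolding Rv_def by blast
        have "f = t" using mid_private[OF dt fg(1,3)] .
        hence "g \<in> ?S" using fg by auto
        moreover have "y \<noteq> ?v" using y vn by auto
        ultimately show "y \<in> \<Union>?S - {?v}" using fg by auto
      qed
      show "\<Union>?S - {?v} \<subseteq> {y\<in>\<Union>?T'. Rv T s ?v y}"
      proof
        fix y assume y: "y \<in> \<Union>?S - {?v}"
        then obtain g where g: "g \<in> T" "D T t g < s" "y \<in> g" "y \<noteq> ?v" by blast
        have "Rv T s ?v y" unfolding Rv_def using tT g istri_memI[OF tt] by blast
        moreover have "y \<in> \<Union>?T'"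
        proof (cases "g = t")
          case True
          hence "y = Min t \<or> y = Max t" using istri_mem[OF tt] g by auto
          thus ?thesis using p by auto
        next
          case False thus ?thesis using g by auto
        qed
        ultimately show "y \<in> {y\<in>\<Union>?T'. Rv T s ?v y}" by simp
      qed
    qed
    have vS: "?v \<in> \<Union>?S" using tS istri_memI[OF tt] by auto
    have finUS: "finite (\<Union>?S)" using finS tri istri_D(4) by auto
    have cNV: "card {y\<in>\<Union>?T'. Rv T s ?v y} = card ?S + 1"
      unfolding NV using cS vS finUS by simp
    have cNT: "card {g\<in>?T'. Rt T s t g} = card ?S - 1"
      unfolding NT using tS finS by simp
    have cS1: "card ?S \<ge> 1" using tS finS by (metis One_nat_def Suc_leI card_gt_0_iff empty_iff)
    have clV: "\<forall>a\<in>{y\<in>\<Union>?T'. Rv T s ?v y}. \<forall>b\<in>{y\<in>\<Union>?T'. Rv T s ?v y}. a \<noteq> b \<longrightarrow> Rv T s a b"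
    proof (intro ballI impI)
      fix a b assume a: "a \<in> {y\<in>\<Union>?T'. Rv T s ?v y}" and b: "b \<in> {y\<in>\<Union>?T'. Rv T s ?v y}"
      obtain g where g: "g \<in> T" "D T t g < s" "a \<in> g" using a unfolding NV by blast
      obtain h where h: "h \<in> T" "D T t h < s" "b \<in> h" using b unfolding NV by blast
      have "D T g h < s" using ball_clique[OF dt g(1) h(1) g(2) h(2)] .
      thus "Rv T s a b" unfolding Rv_def using g h by blast
    qed
    have clT: "\<forall>a\<in>{g\<in>?T'. Rt T s t g}. \<forall>b\<in>{g\<in>?T'. Rt T s t g}. a \<noteq> b \<longrightarrow> Rt T s a b"
      using ball_clique[OF dt] by (auto simp: Rt_def)
    have finU': "finite (\<Union>?T')" using fin tri istri_D(4) by auto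
    have finT': "finite ?T'" using fin by simp
    have tn: "t \<notin> ?T'" by simp
    have cV: "card (Parts (Rv T s) (\<Union>T) (m + 2)) =
        (m + 2 - (card ?S + 1)) * card (Parts (Rv T s) (\<Union>?T') (m + 2)) + card (Parts (Rv T s) (\<Union>?T') (m + 1))"
      using count_insert[OF finU' vn Rv_sym clV, where m = "m + 2"] cNV U by simp
    have TT: "T = insert t ?T'" using tT by auto
    have cT: "card (Parts (Rt T s) T m) =
        (m - (card ?S - 1)) * card (Parts (Rt T s) ?T' m) + (if m = 0 then 0 else card (Parts (Rt T s) ?T' (m - 1)))"
      using count_insert[OF finT' tn Rt_sym clT, where m = m] cNT TT by simp
    have eqV: "Parts (Rv T s) (\<Union>?T') k = Parts (Rv ?T' s) (\<Union>?T') k" for k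
      using Rv_remove[OF dt tr] by (intro Parts_cong) auto
    have eqT: "Parts (Rt T s) ?T' k = Parts (Rt ?T' s) ?T' k" for k
      using D_remove[OF dt] by (intro Parts_cong) (auto simp: Rt_def)
    show ?thesis
    proof (cases m)
      case 0
      have "Parts (Rv ?T' s) (\<Union>?T') 1 = {}"
      proof (rule ccontr)
        assume "Parts (Rv ?T' s) (\<Union>?T') 1 \<noteq> {}"
        then obtain P where P: "P \<in> Parts (Rv ?T' s) (\<Union>?T') 1" by blast
        have rT': "\<rho> \<in> ?T'" using tr rootin by auto
        have sub: "\<rho> \<subseteq> \<Union>?T'" using rT' by auto
        have rv: "Rv ?T' s a b" if "a \<in> \<rho>" "b \<in> \<rho>" for a b
          unfolding Rv_def using that rT' s by (intro bexI[of _ \<rho>] conjI) (auto simp: D_self)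
        have cl: "\<forall>a\<in>\<rho>. \<forall>b\<in>\<rho>. a \<noteq> b \<longrightarrow> Rv ?T' s a b" using rv by blast
        have "card \<rho> \<le> 1" using clique_lower[OF finU' sub cl P] .
        thus False using istri_D(5)[OF tri[OF rootin]] by simp
      qed
      thus ?thesis using cV cT eqV 0 cS1 by simp
    next
      case (Suc k)
      have a: "card (Parts (Rv T s) (\<Union>?T') (m + 2)) = card (Parts (Rt ?T' s) ?T' m)"
        using IH[of m] eqV by simp
      have b: "card (Parts (Rv T s) (\<Union>?T') (m + 1)) = card (Parts (Rt ?T' s) ?T' (m - 1))"
        using IH[of k] eqV Suc by simp
      have c: "m + 2 - (card ?S + 1) = m - (card ?S - 1)" using cS1 by simp
      have e1: "card (Parts (Rt T s) ?T' m) = card (Parts (Rt ?T' s) ?T' m)" using eqT by simp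
      have e2: "card (Parts (Rt T s) ?T' (m - 1)) = card (Parts (Rt ?T' s) ?T' (m - 1))" using eqT by simp
      have l: "card (Parts (Rv T s) (\<Union>T) (m + 2)) = (m - (card ?S - 1)) * card (Parts (Rt ?T' s) ?T' m) + card (Parts (Rt ?T' s) ?T' (m - 1))"
        by (simp only: cV a b c)
      have r: "card (Parts (Rt T s) T m) = (m - (card ?S - 1)) * card (Parts (Rt ?T' s) ?T' m) + card (Parts (Rt ?T' s) ?T' (m - 1))"
      proof -
        have "card (Parts (Rt T s) T m) = (m - (card ?S - 1)) * card (Parts (Rt T s) ?T' m) + card (Parts (Rt T s) ?T' (m - 1))"
          using cT Suc by simp
        also have "\<dots> = (m - (card ?S - 1)) * card (Parts (Rt ?T' s) ?T' m) + card (Parts (Rt ?T' s) ?T' (m - 1))"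
          unfolding e1 e2 ..
        finally show ?thesis .
      qed
      show ?thesis using l r by simp
    qed
  qed
qed


lemma poly_good:
  "poly_triang i j T \<Longrightarrow> i < j \<and> finite T \<and> (\<forall>f\<in>T. istri f \<and> i \<le> Min f \<and> Max f \<le> j) \<and> lam T \<and>
     \<Union>T \<union> {i, j} = {i..j} \<and> (T = {} \<longrightarrow> j = Suc i) \<and>
     (T \<noteq> {} \<longrightarrow> (\<exists>\<rho>\<in>T. Min \<rho> = i \<and> Max \<rho> = j \<and> good T \<rho>))"
proof (induction rule: poly_triang.induct)
  case (edge i)
  have "{i, Suc i} = {i..Suc i}" by auto
  thus ?case by (simp add: lam_def)
next
  case (split i k j T1 T2)
  define \<rho> where "\<rho> = {i, k, j}"
  let ?T = "{\<rho>} \<union> T1 \<union> T2"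
  have r: "Min \<rho> = i" "Max \<rho> = j" "mid \<rho> = k" "istri \<rho>"
    using tri_vals[OF split.hyps(1,2)] split.hyps(1,2) unfolding \<rho>_def istri_def by auto
  have h1: "i < k" "finite T1" "\<forall>f\<in>T1. istri f \<and> i \<le> Min f \<and> Max f \<le> k" "lam T1"
       "\<Union>T1 \<union> {i, k} = {i..k}" "T1 = {} \<longrightarrow> k = Suc i"
       "T1 \<noteq> {} \<longrightarrow> (\<exists>\<rho>\<in>T1. Min \<rho> = i \<and> Max \<rho> = k \<and> good T1 \<rho>)"
    using split.IH(1) by auto
  have h2: "k < j" "finite T2" "\<forall>f\<in>T2. istri f \<and> k \<le> Min f \<and> Max f \<le> j" "lam T2"
       "\<Union>T2 \<union> {k, j} = {k..j}" "T2 = {} \<longrightarrow> j = Suc k"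
       "T2 \<noteq> {} \<longrightarrow> (\<exists>\<rho>\<in>T2. Min \<rho> = k \<and> Max \<rho> = j \<and> good T2 \<rho>)"
    using split.IH(2) by auto
  have b1: "below f \<rho>" if "f \<in> T1" for f using h1(3) that r unfolding below_def by auto
  have b2: "below f \<rho>" if "f \<in> T2" for f using h2(3) that r unfolding below_def by auto
  have d12: "Max f \<le> Min g" if "f \<in> T1" "g \<in> T2" for f g using h1(3) h2(3) that by force
  have lamT: "lam ?T"
    unfolding lam_def
  proof (intro ballI impI)
    fix f g assume f: "f \<in> ?T" and g: "g \<in> ?T" and ne: "f \<noteq> g"
    consider "f = \<rho>" | "f \<in> T1" | "f \<in> T2" using f by auto
    thus "below f g \<or> below g f \<or> Max f \<le> Min g \<or> Max g \<le> Min f"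
    proof cases
      case 1
      consider "g = \<rho>" | "g \<in> T1" | "g \<in> T2" using g by auto
      thus ?thesis using 1 ne b1 b2 by cases auto
    next
      case 2
      consider "g = \<rho>" | "g \<in> T1" | "g \<in> T2" using g by auto
      thus ?thesis
      proof cases
        case 2
        thus ?thesis using \<open>f \<in> T1\<close> ne h1(4) unfolding lam_def by blast
      qed (use 2 b1 d12 in auto)
    next
      case 3
      consider "g = \<rho>" | "g \<in> T1" | "g \<in> T2" using g by auto
      thus ?thesis
      proof cases
        case 3
        thus ?thesis using \<open>f \<in> T2\<close> ne h2(4) unfolding lam_def by blast
      qed (use 3 b2 d12 in auto)
    qed
  qed
  have U: "\<Union>?T \<union> {i, j} = {i..j}"
  proof -
    have "\<Union>?T \<union> {i, j} = \<rho> \<union> (\<Union>T1 \<union> {i, k}) \<union> (\<Union>T2 \<union> {k, j})" by (auto simp: \<rho>_def)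
    also have "\<dots> = {i..j}" using h1(5) h2(5) split.hyps(1,2) by (auto simp: \<rho>_def)
    finally show ?thesis .
  qed
  have par: "\<forall>f\<in>?T. f \<noteq> \<rho> \<longrightarrow> (\<exists>p\<in>?T. below f p \<and> Min f \<in> p \<and> Max f \<in> p)"
  proof (intro ballI impI)
    fix f assume f: "f \<in> ?T" "f \<noteq> \<rho>"
    hence "f \<in> T1 \<or> f \<in> T2" by auto
    thus "\<exists>p\<in>?T. below f p \<and> Min f \<in> p \<and> Max f \<in> p"
    proof
      assume fT1: "f \<in> T1"
      obtain \<rho>1 where r1: "\<rho>1 \<in> T1" "Min \<rho>1 = i" "Max \<rho>1 = k" "good T1 \<rho>1" using h1(7) fT1 by auto
      show ?thesis
      proof (cases "f = \<rho>1")
        case True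
        thus ?thesis using b1[OF fT1] r1 by (intro bexI[of _ \<rho>]) (auto simp: \<rho>_def)
      next
        case False
        then obtain p where "p \<in> T1" "below f p" "Min f \<in> p" "Max f \<in> p"
          using r1(4) fT1 unfolding good_def by blast
        thus ?thesis by auto
      qed
    next
      assume fT2: "f \<in> T2"
      obtain \<rho>2 where r2: "\<rho>2 \<in> T2" "Min \<rho>2 = k" "Max \<rho>2 = j" "good T2 \<rho>2" using h2(7) fT2 by auto
      show ?thesis
      proof (cases "f = \<rho>2")
        case True
        thus ?thesis using b2[OF fT2] r2 by (intro bexI[of _ \<rho>]) (auto simp: \<rho>_def)
      next
        case False
        then obtain p where "p \<in> T2" "below f p" "Min f \<in> p" "Max f \<in> p"
          using r2(4) fT2 unfolding good_def by blast
        thus ?thesis by auto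
      qed
    qed
  qed
  have gd: "good ?T \<rho>"
    unfolding good_def using h1(2,3) h2(2,3) r lamT b1 b2 par by auto
  have bnd: "\<forall>f\<in>?T. istri f \<and> i \<le> Min f \<and> Max f \<le> j" using h1(3) h2(3) r split.hyps by force
  show ?case using gd bnd lamT U r split.hyps h1(2) h2(2) unfolding \<rho>_def by auto
qed


theorem corollary3p8:
  fixes n r s :: nat and T :: "nat set set"
  assumes "polygon_triangulation n T" and "r \<ge> 1" and "s \<ge> 1"
  shows "\<exists>\<phi>. bij_betw \<phi>
     {P. partition_on {0..<n} P \<and> card P = r + 2 \<and> (\<forall>B\<in>P. vert_scattered T (s + 1) B)}
     {Q. partition_on T Q \<and> card Q = r \<and> (\<forall>B\<in>Q. tri_scattered T s B)}"
proof -
  have n3: "n \<ge> 3" and pt: "poly_triang 0 (n - 1) T" using assms(1) by (auto simp: polygon_triangulation_def)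
  have pg: "finite T" "\<Union>T \<union> {0, n - 1} = {0..n - 1}" "T = {} \<longrightarrow> n - 1 = Suc 0"
     "T \<noteq> {} \<longrightarrow> (\<exists>\<rho>\<in>T. Min \<rho> = 0 \<and> Max \<rho> = n - 1 \<and> good T \<rho>)"
    using poly_good[OF pt] by auto
  have "T \<noteq> {}" using pg(3) n3 by auto
  then obtain \<rho> where r: "\<rho> \<in> T" "Min \<rho> = 0" "Max \<rho> = n - 1" "good T \<rho>" using pg(4) by blast
  interpret gt T \<rho> by (rule gt.intro) (rule r(4))
  have tr: "istri \<rho>" using tri r(1) by auto
  have "{0, n - 1} \<subseteq> \<Union>T" using istri_memI[OF tr] r by auto
  hence "\<Union>T = \<Union>T \<union> {0, n - 1}" by auto
  also have "\<dots> = {0..n - 1}" using pg(2) .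
  also have "\<dots> = {0..<n}" using n3 by auto
  finally have UT: "\<Union>T = {0..<n}" .
  have s0: "0 < s" using assms(3) by simp
  have e1: "{P. partition_on {0..<n} P \<and> card P = r + 2 \<and> (\<forall>B\<in>P. vert_scattered T (s + 1) B)}
      = Parts (Rv T s) (\<Union>T) (r + 2)"
  proof -
    have "vert_scattered T (s + 1) B = indep (Rv T s) B" if "B \<subseteq> \<Union>T" for B
      using vert_scat_iff[OF that] by simp
    moreover have "B \<subseteq> \<Union>T" if "partition_on {0..<n} P" "B \<in> P" for P B
      using that UT by (auto simp: partition_on_def)
    ultimately show ?thesis unfolding Parts_def UT by blast
  qed
  have e2: "{Q. partition_on T Q \<and> card Q = r \<and> (\<forall>B\<in>Q. tri_scattered T s B)} = Parts (Rt T s) T r"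
  proof -
    have "tri_scattered T s B = indep (Rt T s) B" if "B \<subseteq> T" for B
      using tri_scat_iff[OF that] by simp
    moreover have "B \<subseteq> T" if "partition_on T P" "B \<in> P" for P B
      using that by (auto simp: partition_on_def)
    ultimately show ?thesis unfolding Parts_def by blast
  qed
  have c: "card (Parts (Rv T s) (\<Union>T) (r + 2)) = card (Parts (Rt T s) T r)"
    using main_count[OF r(4) s0] .
  have f1: "finite (Parts (Rv T s) (\<Union>T) (r + 2))" using UT by (simp add: finite_Parts)
  have f2: "finite (Parts (Rt T s) T r)" using fin by (simp add: finite_Parts)
  show ?thesis unfolding e1 e2 using finite_same_card_bij[OF f1 f2 c] .
qed


end
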